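(* Let $X$ and $Y$ be two Jordan curves in $\mathbb{R}^2$, with interiors (bounded complementary components) $\mathcal{B}_X$ and $\mathcal{B}_Y$. If $f:\mathcal{B}_X\to\mathbb{R}^2$ is a bounded local homeomorphism that has a continuous extension to the boundary $X$ such that $f(X)\subset Y$, then $f:\mathcal{B}_X\to\mathcal{B}_Y$ is a global homeomorphism. *)

theory Defs
  imports "HOL-Analysis.Analysis"
begin

definition jordan_curve :: "complex set \<Rightarrow> bool" where
  "jordan_curve X \<longleftrightarrow>
     (\<exists>c. simple_path c \<and> pathfinish c = pathstart c \<and> path_image c = X)"

definition local_homeomorphism_on :: "'a::topological_space set \<Rightarrow> ('a \<Rightarrow> 'b::topological_space) \<Rightarrow> bool" where
  "local_homeomorphism_on S f \<longleftrightarrow>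
     (\<forall>x\<in>S. \<exists>U V g. x \<in> U \<and> open U \<and> U \<subseteq> S \<and> open V \<and> homeomorphism U V f g)"

end

theory Submission
  imports Defs "HOL-Complex_Analysis.Riemann_Mapping"
begin

lemma lh_open_image:
  assumes lh: "local_homeomorphism_on S f" and WS: "W \<subseteq> S" and oW: "open W"
  shows "open (f ` W)"
unfolding open_subopen[of "f ` W"]
proof
  fix y assume "y \<in> f ` W"
  then obtain x where x: "x \<in> W" "y = f x" by blast
  have "x \<in> S" using x WS by blast
  then obtain U V g where UVg: "x \<in> U" "open U" "U \<subseteq> S" "open V" "homeomorphism U V f g"
    using lh unfolding local_homeomorphism_on_def by metis
  have "openin (top_of_set U) (W \<inter> U)"
    using oW UVg(2) by (intro open_subset) auto
  then have "openin (top_of_set V) (f ` (W \<inter> U))"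
    by (rule homeomorphism_imp_open_map[OF UVg(5)])
  then have "open (f ` (W \<inter> U))"
    using UVg(4) by (rule openin_open_trans)
  moreover have "y \<in> f ` (W \<inter> U)" using x UVg(1) by blast
  moreover have "f ` (W \<inter> U) \<subseteq> f ` W" by blast
  ultimately show "\<exists>T. open T \<and> y \<in> T \<and> T \<subseteq> f ` W" by blast
qed

lemma proper_lh_covering:
  fixes f F :: "complex \<Rightarrow> complex"
  assumes lh: "local_homeomorphism_on S f" and oS: "open S"
    and cC: "compact C" and SC: "S \<subseteq> C"
    and contF: "continuous_on C F" and Ff: "\<And>z. z \<in> S \<Longrightarrow> F z = f z"
    and bd: "F ` (C - S) \<inter> T0 = {}" and im: "f ` S = T0"
  shows "covering_space S f T0"
proof
  have contf: "continuous_on S f"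
    using continuous_on_subset[OF contF SC] Ff by (rule continuous_on_eq)
  show "continuous_on S f" by (fact contf)
  show "f ` S = T0" by (fact im)
  fix y assume y: "y \<in> T0"
  define P where "P = {x\<in>S. f x = y}"
  have P_eq: "P = C \<inter> {x\<in>C. F x = y}"
    using SC Ff bd y unfolding P_def by force
  have "compact P"
  proof -
    have "closed {x\<in>C. F x = y}"
      by (rule continuous_closed_preimage_constant[OF contF compact_imp_closed[OF cC]])
    then show ?thesis unfolding P_eq using cC by (rule compact_Int_closed[rotated])
  qed
  obtain U V g where UVg: "\<And>x. x \<in> P \<Longrightarrow> x \<in> U x \<and> open (U x) \<and> U x \<subseteq> S \<and> open (V x) \<and> homeomorphism (U x) (V x) f (g x)"
  proof -
    have "\<forall>x\<in>P. \<exists>U. \<exists>V. \<exists>g. x \<in> U \<and> open U \<and> U \<subseteq> S \<and> open V \<and> homeomorphism U V f g"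
      using lh unfolding local_homeomorphism_on_def P_def by blast
    then obtain U where "\<forall>x\<in>P. \<exists>V. \<exists>g. x \<in> U x \<and> open (U x) \<and> U x \<subseteq> S \<and> open V \<and> homeomorphism (U x) V f g"
      by (rule bchoice_iff[THEN iffD1, elim_format]) blast
    then obtain V where "\<forall>x\<in>P. \<exists>g. x \<in> U x \<and> open (U x) \<and> U x \<subseteq> S \<and> open (V x) \<and> homeomorphism (U x) (V x) f g"
      by (rule bchoice_iff[THEN iffD1, elim_format]) blast
    then obtain g where "\<forall>x\<in>P. x \<in> U x \<and> open (U x) \<and> U x \<subseteq> S \<and> open (V x) \<and> homeomorphism (U x) (V x) f (g x)"
      by (rule bchoice_iff[THEN iffD1, elim_format]) blast
    then show ?thesis using that by blast
  qed
  obtain P' where P': "P' \<subseteq> P" "finite P'" "P \<subseteq> (\<Union>c\<in>P'. U c)"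
    using compactE_image[OF \<open>compact P\<close>, of P U] UVg by blast
  have "P \<subseteq> (\<lambda>c. g c y) ` P'"
  proof
    fix p assume p: "p \<in> P"
    then obtain c where c: "c \<in> P'" "p \<in> U c" using P' by blast
    then have "g c (f p) = p" using UVg P' homeomorphism_apply1 by blast
    then show "p \<in> (\<lambda>c. g c y) ` P'" using p c unfolding P_def by auto
  qed
  then have finP: "finite P" using P' finite_subset by blast
  define r where "r x = (if P - {x} = {} then 1 else Min ((\<lambda>z. dist x z) ` (P - {x})) / 2)" for x
  have rpos: "r x > 0" if "x \<in> P" for x
    using finP that by (auto simp: r_def)
  have rle: "r x \<le> dist x z / 2" if "x \<in> P" "z \<in> P" "z \<noteq> x" for x z
  proof -
    have "P - {x} \<noteq> {}" using that by blast
    moreover have "Min ((\<lambda>z. dist x z) ` (P - {x})) \<le> dist x z"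
      using finP that by (intro Min_le) auto
    ultimately show ?thesis by (simp add: r_def)
  qed
  have balldisj: "ball x (r x) \<inter> ball z (r z) = {}" if "x \<in> P" "z \<in> P" "z \<noteq> x" for x z
  proof -
    have "r x + r z \<le> dist x z"
      using rle[OF that] rle[of z x] that by (simp add: dist_commute)
    show ?thesis
    proof (rule ccontr)
      assume "ball x (r x) \<inter> ball z (r z) \<noteq> {}"
      then obtain w where w: "dist x w < r x" "dist z w < r z" by auto
      have "dist x z \<le> dist x w + dist z w" by (rule dist_triangle2)
      with w \<open>r x + r z \<le> dist x z\<close> show False by linarith
    qed
  qed
  define U' where "U' x = U x \<inter> ball x (r x)" for x
  define V' where "V' x = f ` U' x" for x
  have U'S: "U' x \<subseteq> S" if "x \<in> P" for x unfolding U'_def using UVg[OF that] by blast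
  have oU': "open (U' x)" if "x \<in> P" for x unfolding U'_def using UVg[OF that] by (intro open_Int) auto
  have xU': "x \<in> U' x" if "x \<in> P" for x unfolding U'_def using UVg[OF that] rpos[OF that] by auto
  have hom': "homeomorphism (U' x) (V' x) f (g x)" if "x \<in> P" for x
    using UVg[OF that] by (intro homeomorphism_of_subsets[of "U x" "V x" f "g x" "U' x" "V x" "V' x"]) (auto simp: U'_def V'_def)
  have oV': "open (V' x)" if "x \<in> P" for x
    unfolding V'_def using lh_open_image[OF lh U'S oU'] that by blast
  define K where "K = C \<inter> - (\<Union>x\<in>P. U' x)"
  have "compact K" unfolding K_def
    using cC oU' by (intro compact_Int_closed) (auto intro!: open_UN)
  then have "compact (F ` K)"
    using contF by (metis K_def compact_continuous_image continuous_on_subset inf_le1)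
  then have cFK: "closed (F ` K)" by (simp add: compact_imp_closed)
  have yFK: "y \<notin> F ` K"
  proof
    assume "y \<in> F ` K"
    then obtain k where k: "k \<in> K" "F k = y" by blast
    show False
    proof (cases "k \<in> S")
      case True
      then have "k \<in> P" using k Ff P_def by auto
      then show False using k xU' K_def by blast
    next
      case False
      then show False using k bd y K_def by blast
    qed
  qed
  define T where "T = (\<Inter>x\<in>P. V' x) \<inter> T0 - F ` K"
  have oT0: "open T0" using lh_open_image[OF lh order.refl oS] im by simp
  have oT: "open T" unfolding T_def
    using finP oV' oT0 cFK by (intro open_Diff open_Int open_INT) auto
  have yT: "y \<in> T" unfolding T_def V'_def using xU' yFK y P_def by auto
  have TV': "T \<subseteq> V' x" if "x \<in> P" for x using that T_def by auto
  define v where "v = (\<lambda>x. U' x \<inter> f -` T) ` P"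
  show "\<exists>T. y \<in> T \<and> openin (top_of_set T0) T \<and>
             (\<exists>v. \<Union>v = S \<inter> f -` T \<and> (\<forall>u \<in> v. openin (top_of_set S) u) \<and>
                  pairwise disjnt v \<and> (\<forall>u \<in> v. \<exists>q. homeomorphism u T f q))"
  proof (intro exI conjI)
    show "y \<in> T" by (fact yT)
    show "openin (top_of_set T0) T" using oT by (auto simp: T_def intro: open_subset)
    show "\<Union>v = S \<inter> f -` T"
    proof
      show "\<Union>v \<subseteq> S \<inter> f -` T" using U'S v_def by auto
      show "S \<inter> f -` T \<subseteq> \<Union>v"
      proof
        fix z assume z: "z \<in> S \<inter> f -` T"
        have "z \<notin> K"
        proof
          assume "z \<in> K"
          then have "f z \<in> F ` K" using Ff z by force
          then show False using z T_def by auto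
        qed
        then obtain x where "x \<in> P" "z \<in> U' x" using z SC K_def by auto
        then show "z \<in> \<Union>v" using z v_def by auto
      qed
    qed
    show "\<forall>u\<in>v. openin (top_of_set S) u"
    proof
      fix u assume "u \<in> v"
      then obtain x where x: "x \<in> P" "u = U' x \<inter> f -` T" using v_def by auto
      have "continuous_on (U' x) f" using hom'[OF x(1)] homeomorphism_cont1 by blast
      then have "open u" using continuous_open_preimage oU' x oT by blast
      then show "openin (top_of_set S) u" using x U'S by (auto intro: open_subset)
    qed
    show "pairwise disjnt v"
      unfolding pairwise_def v_def
    proof (clarify)
      fix x z assume xz: "x \<in> P" "z \<in> P" "U' x \<inter> f -` T \<noteq> U' z \<inter> f -` T"
      then have "z \<noteq> x" by auto
      then have "ball x (r x) \<inter> ball z (r z) = {}" using balldisj xz by blast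
      then show "disjnt (U' x \<inter> f -` T) (U' z \<inter> f -` T)"
        unfolding U'_def disjnt_def by auto
    qed
    show "\<forall>u\<in>v. \<exists>q. homeomorphism u T f q"
    proof
      fix u assume "u \<in> v"
      then obtain x where x: "x \<in> P" "u = U' x \<inter> f -` T" using v_def by auto
      have "f ` (U' x \<inter> f -` T) = T"
        using TV'[OF x(1)] unfolding V'_def by auto
      then have "homeomorphism u T f (g x)"
        using homeomorphism_of_subsets[OF hom'[OF x(1)], of u T T] TV'[OF x(1)] x by auto
      then show "\<exists>q. homeomorphism u T f q" by blast
    qed
  qed
qed

theorem lemma9:
  fixes X Y :: "complex set" and f :: "complex \<Rightarrow> complex"
  assumes "jordan_curve X" and "jordan_curve Y"
    and "local_homeomorphism_on (inside X) f"
    and "bounded (f ` inside X)"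
    and "\<exists>F. continuous_on (inside X \<union> X) F \<and> (\<forall>z\<in>inside X. F z = f z) \<and> F ` X \<subseteq> Y"
  shows "\<exists>g. homeomorphism (inside X) (inside Y) f g"
proof -
  obtain c where c: "simple_path c" "pathfinish c = pathstart c" "path_image c = X"
    using assms(1) unfolding jordan_curve_def by blast
  obtain d where d: "simple_path d" "pathfinish d = pathstart d" "path_image d = Y"
    using assms(2) unfolding jordan_curve_def by blast
  note JX = Jordan_inside_outside[OF c(1,2), unfolded c(3)]
  note JY = Jordan_inside_outside[OF d(1,2), unfolded d(3)]
  obtain F where F: "continuous_on (inside X \<union> X) F" "\<And>z. z \<in> inside X \<Longrightarrow> F z = f z" "F ` X \<subseteq> Y"
    using assms(5) by blast
  let ?S = "inside X" and ?C = "inside X \<union> X"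
  have Ceq: "closure ?S = ?C" using JX closure_Un_frontier by metis
  have cC: "compact ?C" using JX Ceq compact_closure by metis
  have lh: "local_homeomorphism_on ?S f" by (fact assms(3))
  have oS: "open ?S" using JX by blast
  have contf: "continuous_on ?S f"
    using continuous_on_subset[OF F(1), of ?S] F(2) by (rule continuous_on_eq) auto
  define W where "W = f ` ?S"
  have oW: "open W" unfolding W_def using lh_open_image[OF lh order.refl oS] .
  have cW: "connected W" unfolding W_def using connected_continuous_image contf JX by blast
  have neW: "W \<noteq> {}" unfolding W_def using JX by blast
  have bW: "bounded W" unfolding W_def by (fact assms(4))
  have "compact (F ` ?C)" using cC F(1) compact_continuous_image by blast
  then have "closed (F ` ?C)" by (rule compact_imp_closed)
  moreover have "W \<subseteq> F ` ?C" unfolding W_def using F(2) by force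
  ultimately have clW: "closure W \<subseteq> F ` ?C" by (rule closure_minimal[rotated])
  have frW: "frontier W \<subseteq> Y"
  proof
    fix w assume w: "w \<in> frontier W"
    then have "w \<in> closure W" "w \<notin> W" using oW by (auto simp: frontier_def interior_open)
    then obtain z where z: "z \<in> ?C" "w = F z" using clW by auto
    have "z \<notin> ?S" using z F(2) \<open>w \<notin> W\<close> W_def by auto
    then show "w \<in> Y" using z F(3) by auto
  qed
  have WO: "W \<inter> outside Y = {}"
  proof (rule ccontr)
    assume "W \<inter> outside Y \<noteq> {}"
    moreover have "outside Y - W \<noteq> {}"
      using JY bW bounded_subset by (metis Diff_eq_empty_iff)
    ultimately have "outside Y \<inter> frontier W \<noteq> {}"
      using connected_Int_frontier[of "outside Y" W] JY by (simp add: Int_commute)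
    then show False using frW outside_no_overlap by blast
  qed
  have WY: "W \<inter> Y = {}"
  proof -
    have "Y \<subseteq> closure (outside Y)" using JY frontier_def by (metis Diff_subset)
    moreover have "W \<inter> closure (outside Y) = {}" using WO oW open_Int_closure_eq_empty by blast
    ultimately show ?thesis by blast
  qed
  have WsubY: "W \<subseteq> inside Y" using WO WY JY by blast
  have Weq: "W = inside Y"
  proof (rule ccontr)
    assume "W \<noteq> inside Y"
    then have "inside Y - W \<noteq> {}" using WsubY by blast
    moreover have "inside Y \<inter> W \<noteq> {}" using WsubY neW by blast
    ultimately have "inside Y \<inter> frontier W \<noteq> {}"
      using connected_Int_frontier[of "inside Y" W] JY by blast
    then show False using frW inside_no_overlap by blast
  qed
  have bd: "F ` (?C - ?S) \<inter> inside Y = {}" using F(3) inside_no_overlap by blast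
  have cov: "covering_space ?S f (inside Y)"
    using proper_lh_covering[OF lh oS cC _ F(1) F(2) bd] Weq W_def by blast
  obtain x0 where x0: "x0 \<in> ?S" using JX by blast
  have sc: "simply_connected (inside Y)"
    using simply_connected_inside_simple_path[OF d(1)] d(3) by simp
  have lpc: "locally path_connected (inside Y)" using JY open_imp_locally_path_connected by blast
  have fx0: "f x0 \<in> inside Y" using x0 Weq W_def by blast
  obtain g where g: "continuous_on (inside Y) g" "g \<in> inside Y \<rightarrow> ?S" "g (f x0) = x0"
      "\<And>y. y \<in> inside Y \<Longrightarrow> f (g y) = id y"
    using covering_space_lift_strong[OF cov x0 fx0 sc lpc, of id] by auto
  have gf: "g (f x) = x" if "x \<in> ?S" for x
  proof -
    have "(g \<circ> f) x = id x"
    proof (rule covering_space_lift_unique[OF cov, of "g \<circ> f" x0 id ?S f])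
      show "(g \<circ> f) x0 = id x0" using g by simp
      show "continuous_on ?S f" by (fact contf)
      show "f \<in> ?S \<rightarrow> inside Y" using Weq W_def by blast
      show "continuous_on ?S (g \<circ> f)"
        using continuous_on_compose[OF contf] g(1) Weq W_def by (metis)
      show "g \<circ> f \<in> ?S \<rightarrow> ?S"
      proof
        fix x assume "x \<in> ?S"
        then have "f x \<in> inside Y" using Weq W_def by blast
        then show "(g \<circ> f) x \<in> ?S" using g(2) by (simp add: funcset_mem)
      qed
      show "\<And>x. x \<in> ?S \<Longrightarrow> f x = f ((g \<circ> f) x)"
      proof -
        fix x assume "x \<in> ?S"
        then have "f x \<in> inside Y" using Weq W_def by blast
        then show "f x = f ((g \<circ> f) x)" using g(4) by simp
      qed
      show "continuous_on ?S id" by simp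
      show "id \<in> ?S \<rightarrow> ?S" by simp
      show "\<And>x. x \<in> ?S \<Longrightarrow> f x = f (id x)" by simp
      show "connected ?S" using JX by blast
    qed (use x0 that in auto)
    then show ?thesis by simp
  qed
  have gim: "g ` inside Y = ?S"
  proof
    show "g ` inside Y \<subseteq> ?S" using g(2) by auto
    show "?S \<subseteq> g ` inside Y"
    proof
      fix x assume "x \<in> ?S"
      then have "x = g (f x)" "f x \<in> inside Y" using gf Weq W_def by auto
      then show "x \<in> g ` inside Y" by blast
    qed
  qed
  have "homeomorphism ?S (inside Y) f g"
    unfolding homeomorphism_def
  proof (intro conjI ballI)
    show "f ` ?S = inside Y" using Weq W_def by simp
  qed (use gim contf g(1,4) gf in auto)
  then show ?thesis by blast
qed

end
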